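(* Let $K$ be a field, $P=K[x_1,\dots,x_n]$, $X=\{x_1,\dots,x_n\}$, $I\subseteq\mathfrak M=\langle x_1,\dots,x_n\rangle$ an ideal, and $Z\subseteq X$ a set of $s$ distinct indeterminates such that $I$ contains a coherently $Z$-separating tuple $(f_1,\dots,f_s)$. If $s=\dim_K(\mathrm{Lin}_{\mathfrak M}(I))$, then $\mathrm{edim}(P/I)=n-s$ and the $Z$-separating re-embedding $\Phi:P/I\to\widehat P/(I\cap\widehat P)$, $\widehat P=K[X\setminus Z]$, is an optimal re-embedding (i.e., every $K$-algebra isomorphism $P/I\cong P''/I''$ with $P''$ a polynomial ring over $K$ satisfies $\dim P''\ge n-s$).
   Context: For $f\in\mathfrak M$, $\mathrm{Lin}_{\mathfrak M}(f)$ is the homogeneous degree-one part of $f$, and $\mathrm{Lin}_{\mathfrak M}(I)=\langle\mathrm{Lin}_{\mathfrak M}(f)\mid f\in I\rangle_K$. For $f\in P$, $\mathrm{indets}(f)$ is the set of indeterminates dividing some term in the support of $f$; for $f\in\mathfrak M$ with $z$ occurring in $\mathrm{Lin}_{\mathfrak M}(f)$ and $c\neq0$ the coefficient of $z$ in $f$, $\mathrm{tail}_z(f)=z-\frac1cf$, and $f$ is $z$-separating if $z\notin\mathrm{indets}(\mathrm{tail}_z(f))$. A tuple $(f_1,\dots,f_s)$ of nonzero elements of $\mathfrak M$ is coherently $Z$-separating ($Z=\{z_1,\dots,z_s\}$) if each $f_i$ is $z_i$-separating and $z_i\notin\mathrm{indets}(f_j)$ for $j\ne i$. The $Z$-separating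 re-embedding is the $K$-algebra isomorphism $P/I\to\widehat P/(I\cap\widehat P)$ induced by $x\mapsto x$ for $x\notin Z$ and $z_i\mapsto\mathrm{tail}_{z_i}(f_i)$. $\mathrm{edim}(P/I)$ is the minimal $m$ with $P/I\cong K[y_1,\dots,y_m]/I'$ for some ideal $I'$. *)

theory Defs
  imports "HOL.Vector_Spaces" "HOL-Library.Poly_Mapping" "HOL-Algebra.QuotRing"
begin

text \<open>Multivariate polynomials over a field 'k: indeterminates are indexed by natural
  numbers, monomials are finitely supported exponent vectors nat \<Rightarrow>0 nat.\<close>

type_synonym 'k mpoly = "(nat \<Rightarrow>\<^sub>0 nat) \<Rightarrow>\<^sub>0 'k"

definition Const :: "'k::field \<Rightarrow> 'k mpoly" where
  "Const c = Poly_Mapping.single 0 c"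

definition Var :: "nat \<Rightarrow> 'k::field mpoly" where
  "Var v = Poly_Mapping.single (Poly_Mapping.single v 1) 1"

definition indets :: "'k::field mpoly \<Rightarrow> nat set" where
  "indets f = \<Union> ((\<lambda>m::nat \<Rightarrow>\<^sub>0 nat. Poly_Mapping.keys m) ` Poly_Mapping.keys f)"

definition polyring :: "nat set \<Rightarrow> 'k::field mpoly ring" where
  "polyring V = \<lparr>carrier = {p. indets p \<subseteq> V}, monoid.mult = (*), one = 1,
                  zero = 0, add = (+)\<rparr>"

definition maxideal :: "nat set \<Rightarrow> 'k::field mpoly set" where
  "maxideal V = {p \<in> carrier (polyring V). Poly_Mapping.lookup p 0 = 0}"

definition mdeg :: "(nat \<Rightarrow>\<^sub>0 nat) \<Rightarrow> nat" where
  "mdeg m = (\<Sum>v\<in>Poly_Mapping.keys m. Poly_Mapping.lookup m v)"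

definition Lin :: "'k::field mpoly \<Rightarrow> 'k mpoly" where
  "Lin f = Abs_poly_mapping (\<lambda>m. if mdeg m = 1 then Poly_Mapping.lookup f m else 0)"

definition kscale :: "'k::field \<Rightarrow> 'k mpoly \<Rightarrow> 'k mpoly" where
  "kscale c p = Const c * p"

definition LinI :: "'k::field mpoly set \<Rightarrow> 'k mpoly set" where
  "LinI I = module.span kscale (Lin ` I)"

definition dimK :: "'k::field mpoly set \<Rightarrow> nat" where
  "dimK S = vector_space.dim kscale S"

definition coeffVar :: "nat \<Rightarrow> 'k::field mpoly \<Rightarrow> 'k" where
  "coeffVar z f = Poly_Mapping.lookup f (Poly_Mapping.single z 1)"

definition tail :: "nat \<Rightarrow> 'k::field mpoly \<Rightarrow> 'k mpoly" where
  "tail z f = Var z - Const (1 / coeffVar z f) * f"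

definition separating :: "nat \<Rightarrow> 'k::field mpoly \<Rightarrow> bool" where
  "separating z f \<longleftrightarrow> coeffVar z f \<noteq> 0 \<and> z \<notin> indets (tail z f)"

definition coherently_separating ::
    "nat set \<Rightarrow> nat \<Rightarrow> (nat \<Rightarrow> nat) \<Rightarrow> (nat \<Rightarrow> 'k::field mpoly) \<Rightarrow> bool" where
  "coherently_separating X s z f \<longleftrightarrow>
     (\<forall>i<s. f i \<noteq> 0 \<and> f i \<in> maxideal X \<and> separating (z i) (f i)) \<and>
     (\<forall>i<s. \<forall>j<s. j \<noteq> i \<longrightarrow> z i \<notin> indets (f j))"

definition subst :: "(nat \<Rightarrow> 'k::field mpoly) \<Rightarrow> 'k mpoly \<Rightarrow> 'k mpoly" where
  "subst \<sigma> p = (\<Sum>m\<in>Poly_Mapping.keys p. Const (Poly_Mapping.lookup p m) * (\<Prod>v\<in>Poly_Mapping.keys m. \<sigma> v ^ Poly_Mapping.lookup m v))"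

definition sep_subst :: "nat \<Rightarrow> (nat \<Rightarrow> nat) \<Rightarrow> (nat \<Rightarrow> 'k::field mpoly) \<Rightarrow> nat \<Rightarrow> 'k mpoly" where
  "sep_subst s z f v =
     (if \<exists>i<s. z i = v then tail v (f (THE i. i < s \<and> z i = v)) else Var v)"

definition kalg_iso ::
    "nat set \<Rightarrow> 'k::field mpoly set \<Rightarrow> nat set \<Rightarrow> 'k mpoly set \<Rightarrow> ('k mpoly set \<Rightarrow> 'k mpoly set) \<Rightarrow> bool" where
  "kalg_iso V I W J h \<longleftrightarrow>
     h \<in> ring_iso (polyring V Quot I) (polyring W Quot J) \<and>
     (\<forall>c. h (I +>\<^bsub>polyring V\<^esub> Const c) = J +>\<^bsub>polyring W\<^esub> Const c)"

definition edim :: "nat set \<Rightarrow> 'k::field mpoly set \<Rightarrow> nat" where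
  "edim V I = (LEAST m. \<exists>J h. ideal J (polyring {..<m}) \<and> kalg_iso V I {..<m} J h)"

end

theory Submission
  imports Defs
begin

lemma lookup_Const: "Poly_Mapping.lookup (Const c) m = (if m = 0 then c else 0)"
  by (simp add: Const_def lookup_single when_def)
lemma Const_0[simp]: "Const 0 = 0" by (simp add: Const_def)
lemma Const_1[simp]: "Const 1 = 1" by (simp add: Const_def)
lemma Const_add: "Const (a + b) = Const a + Const b" by (simp add: Const_def single_add)
lemma Const_mult: "Const (a * b) = Const a * Const b" by (simp add: Const_def mult_single)
lemma Const_diff: "Const (a - b) = Const a - Const b" by (simp add: Const_def single_diff)

lemma lookup_Const_mult: "Poly_Mapping.lookup (Const c * p) m = c * Poly_Mapping.lookup p m"
  unfolding Const_def mult_map_scale_conv_mult[symmetric]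
  by (simp add: Poly_Mapping.map.rep_eq when_def)

lemma indets_add: "indets (p + q) \<subseteq> indets p \<union> indets q"
proof
  fix v assume "v \<in> indets (p + q)"
  then obtain m where m: "m \<in> Poly_Mapping.keys (p+q)" "v \<in> Poly_Mapping.keys m" unfolding indets_def by auto
  then have "m \<in> Poly_Mapping.keys p \<or> m \<in> Poly_Mapping.keys q" using keys_add[of p q] by auto
  with m show "v \<in> indets p \<union> indets q" unfolding indets_def by auto
qed
lemma indets_uminus[simp]: "indets (- p) = indets p"
proof -
  have "Poly_Mapping.keys (- p) = Poly_Mapping.keys p" by (auto simp: in_keys_iff)
  then show ?thesis unfolding indets_def by simp
qed
lemma indets_diff: "indets (p - q) \<subseteq> indets p \<union> indets q"
  using indets_add[of p "-q"] by simp
lemma indets_mult: "indets (p * q) \<subseteq> indets p \<union> indets q"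
proof
  fix v assume "v \<in> indets (p * q)"
  then obtain m where m: "m \<in> Poly_Mapping.keys (p*q)" "v \<in> Poly_Mapping.keys m" unfolding indets_def by auto
  then obtain a b where ab: "m = a + b" "a \<in> Poly_Mapping.keys p" "b \<in> Poly_Mapping.keys q" using keys_mult[of p q] by auto
  then have "v \<in> Poly_Mapping.keys a \<or> v \<in> Poly_Mapping.keys b" using m keys_add[of a b] by auto
  with ab show "v \<in> indets p \<union> indets q" unfolding indets_def by auto
qed
lemma indets_Const[simp]: "indets (Const c) = {}"
  unfolding indets_def Const_def by simp
lemma indets_0[simp]: "indets 0 = {}" using indets_Const[of 0] by simp
lemma indets_1[simp]: "indets 1 = {}" using indets_Const[of 1] by simp
lemma indets_Var[simp]: "indets (Var v :: 'k::field mpoly) = {v}"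
  unfolding indets_def Var_def by simp
lemma indets_sum: "finite A \<Longrightarrow> indets (\<Sum>a\<in>A. f a) \<subseteq> (\<Union>a\<in>A. indets (f a))"
proof (induction A rule: finite_induct)
  case (insert x F)
  have "indets (f x + sum f F) \<subseteq> indets (f x) \<union> indets (sum f F)" by (rule indets_add)
  then show ?case using insert by auto
qed simp
lemma indets_prod: "finite A \<Longrightarrow> indets (\<Prod>a\<in>A. f a) \<subseteq> (\<Union>a\<in>A. indets (f a))"
proof (induction A rule: finite_induct)
  case (insert x F)
  have "indets (f x * prod f F) \<subseteq> indets (f x) \<union> indets (prod f F)" by (rule indets_mult)
  then show ?case using insert by auto
qed simp
lemma indets_power: "indets (p ^ k) \<subseteq> indets p"
proof (induction k)
  case (Suc k)
  have "indets (p * p ^ k) \<subseteq> indets p \<union> indets (p ^ k)" by (rule indets_mult)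
  then show ?case using Suc by auto
qed simp

lemma carrier_polyring[simp]: "carrier (polyring V) = {p. indets p \<subseteq> V}"
  and mult_polyring[simp]: "mult (polyring V) = (*)"
  and add_polyring[simp]: "add (polyring V) = (+)"
  and one_polyring[simp]: "one (polyring V) = 1"
  and zero_polyring[simp]: "zero (polyring V) = 0"
  by (simp_all add: polyring_def)

lemma cring_polyring: "cring (polyring V :: 'k::field mpoly ring)"
proof (rule cringI)
  show "abelian_group (polyring V :: 'k mpoly ring)"
  proof (rule abelian_groupI, goal_cases)
    case (1 x y) then show ?case using indets_add[of x y] by auto
  next
    case (6 x) then show ?case by (intro bexI[of _ "-x"]) auto
  next case 3 then show ?case by (simp add: add.assoc) next case 4 then show ?case by (simp add: add.commute) qed auto
  show "comm_monoid (polyring V :: 'k mpoly ring)"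
  proof (rule comm_monoidI, goal_cases)
    case (1 x y) then show ?case using indets_mult[of x y] by auto
  next case 3 then show ?case by (simp add: mult.assoc) next case 5 then show ?case by (simp add: mult.commute) qed auto
qed (simp add: distrib_right)

lemma a_inv_polyring: "x \<in> carrier (polyring V) \<Longrightarrow> a_inv (polyring V) x = - (x :: 'k::field mpoly)"
proof -
  interpret cring "polyring V :: 'k mpoly ring" by (rule cring_polyring)
  assume x: "x \<in> carrier (polyring V)"
  show ?thesis by (rule minus_equality) (use x in auto)
qed

lemma a_minus_polyring: "x \<in> carrier (polyring V) \<Longrightarrow> y \<in> carrier (polyring V) \<Longrightarrow>
   a_minus (polyring V) x y = x - (y :: 'k::field mpoly)"
  by (simp add: a_minus_def a_inv_polyring)

definition mon :: "(nat \<Rightarrow> 'k::field mpoly) \<Rightarrow> (nat \<Rightarrow>\<^sub>0 nat) \<Rightarrow> 'k mpoly" where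
  "mon \<sigma> m = (\<Prod>v\<in>Poly_Mapping.keys m. \<sigma> v ^ Poly_Mapping.lookup m v)"

lemma subst_mon: "subst \<sigma> p = (\<Sum>m\<in>Poly_Mapping.keys p. Const (Poly_Mapping.lookup p m) * mon \<sigma> m)"
  unfolding subst_def mon_def ..

lemma mon_superset:
  assumes "finite S" "Poly_Mapping.keys m \<subseteq> S"
  shows "mon \<sigma> m = (\<Prod>v\<in>S. \<sigma> v ^ Poly_Mapping.lookup m v)"
  unfolding mon_def
  by (rule prod.mono_neutral_left) (use assms in \<open>auto simp: in_keys_iff\<close>)

lemma mon_0[simp]: "mon \<sigma> 0 = 1" by (simp add: mon_def)

lemma mon_add: "mon \<sigma> (a + b) = mon \<sigma> a * mon \<sigma> b"
proof -
  let ?S = "Poly_Mapping.keys a \<union> Poly_Mapping.keys b"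
  have fin: "finite ?S" by simp
  have "mon \<sigma> (a + b) = (\<Prod>v\<in>?S. \<sigma> v ^ Poly_Mapping.lookup (a + b) v)"
    by (rule mon_superset[OF fin]) (rule keys_add)
  also have "\<dots> = (\<Prod>v\<in>?S. \<sigma> v ^ Poly_Mapping.lookup a v * \<sigma> v ^ Poly_Mapping.lookup b v)"
    by (simp add: lookup_add power_add)
  also have "\<dots> = mon \<sigma> a * mon \<sigma> b"
    by (simp add: prod.distrib mon_superset[OF fin])
  finally show ?thesis .
qed

lemma subst_superset:
  assumes "finite S" "Poly_Mapping.keys p \<subseteq> S"
  shows "subst \<sigma> p = (\<Sum>m\<in>S. Const (Poly_Mapping.lookup p m) * mon \<sigma> m)"
  unfolding subst_mon
  by (rule sum.mono_neutral_left) (use assms in \<open>auto simp: in_keys_iff\<close>)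

lemma subst_0[simp]: "subst \<sigma> 0 = 0" by (simp add: subst_def)

lemma subst_add: "subst \<sigma> (p + q) = subst \<sigma> p + subst \<sigma> q"
proof -
  let ?S = "Poly_Mapping.keys p \<union> Poly_Mapping.keys q"
  have fin: "finite ?S" by simp
  have "subst \<sigma> (p + q) = (\<Sum>m\<in>?S. Const (Poly_Mapping.lookup (p+q) m) * mon \<sigma> m)"
    by (rule subst_superset[OF fin]) (rule keys_add)
  also have "\<dots> = (\<Sum>m\<in>?S. Const (Poly_Mapping.lookup p m) * mon \<sigma> m + Const (Poly_Mapping.lookup q m) * mon \<sigma> m)"
    by (simp add: lookup_add Const_add distrib_right)
  also have "\<dots> = subst \<sigma> p + subst \<sigma> q"
    by (simp add: sum.distrib subst_superset[OF fin])
  finally show ?thesis .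
qed

lemma subst_single: "subst \<sigma> (Poly_Mapping.single m c) = Const c * mon \<sigma> m"
  by (cases "c = 0") (simp_all add: subst_mon)

lemma subst_sum: "subst \<sigma> (\<Sum>i\<in>A. g i) = (\<Sum>i\<in>A. subst \<sigma> (g i))"
  by (induction A rule: infinite_finite_induct) (simp_all add: subst_add)

lemma pm_decomp: "p = (\<Sum>m\<in>Poly_Mapping.keys p. Poly_Mapping.single m (Poly_Mapping.lookup p m))"
  by (rule poly_mapping_eqI)
     (simp add: lookup_sum lookup_single when_def in_keys_iff sum.delta_remove)

lemma subst_mult: "subst \<sigma> (p * q) = subst \<sigma> p * subst \<sigma> q"
proof -
  let ?sp = "\<lambda>a. Poly_Mapping.single a (Poly_Mapping.lookup p a)"
  let ?sq = "\<lambda>b. Poly_Mapping.single b (Poly_Mapping.lookup q b)"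
  have single: "subst \<sigma> (?sp a * ?sq b) = subst \<sigma> (?sp a) * subst \<sigma> (?sq b)" for a b
    by (simp add: mult_single subst_single Const_mult mon_add ac_simps)
  have "p * q = (\<Sum>a\<in>Poly_Mapping.keys p. ?sp a) * (\<Sum>b\<in>Poly_Mapping.keys q. ?sq b)"
    using pm_decomp[of p] pm_decomp[of q] by simp
  also have "\<dots> = (\<Sum>a\<in>Poly_Mapping.keys p. \<Sum>b\<in>Poly_Mapping.keys q. ?sp a * ?sq b)"
    by (rule sum_product)
  finally have "subst \<sigma> (p * q) = (\<Sum>a\<in>Poly_Mapping.keys p. \<Sum>b\<in>Poly_Mapping.keys q. subst \<sigma> (?sp a) * subst \<sigma> (?sq b))"
    by (simp add: subst_sum single)
  also have "\<dots> = (\<Sum>a\<in>Poly_Mapping.keys p. subst \<sigma> (?sp a)) * (\<Sum>b\<in>Poly_Mapping.keys q. subst \<sigma> (?sq b))"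
    by (rule sum_product[symmetric])
  also have "\<dots> = subst \<sigma> p * subst \<sigma> q"
    by (simp add: subst_sum[symmetric] pm_decomp[symmetric])
  finally show ?thesis .
qed

lemma subst_Const[simp]: "subst \<sigma> (Const c) = Const c"
  using subst_single[of \<sigma> 0 c] by (simp add: Const_def)

lemma subst_1[simp]: "subst \<sigma> 1 = 1"
  using subst_Const[of \<sigma> 1] by simp

lemma subst_Var[simp]: "subst \<sigma> (Var v) = \<sigma> v"
  unfolding Var_def by (simp add: subst_single mon_def)

lemma subst_uminus: "subst \<sigma> (- p) = - subst \<sigma> p"
  using subst_add[of \<sigma> "-p" p] by (simp add: eq_neg_iff_add_eq_0)

lemma subst_diff: "subst \<sigma> (p - q) = subst \<sigma> p - subst \<sigma> q"
  using subst_add[of \<sigma> p "-q"] by (simp add: subst_uminus)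

lemma subst_power: "subst \<sigma> (p ^ k) = subst \<sigma> p ^ k"
  by (induction k) (simp_all add: subst_mult)

lemma subst_prod: "subst \<sigma> (\<Prod>i\<in>A. g i) = (\<Prod>i\<in>A. subst \<sigma> (g i))"
  by (induction A rule: infinite_finite_induct) (simp_all add: subst_mult)

lemma subst_cong:
  assumes "\<And>v. v \<in> indets p \<Longrightarrow> \<sigma> v = \<tau> v"
  shows "subst \<sigma> p = subst \<tau> p"
  unfolding subst_def
proof (rule sum.cong[OF refl], rule arg_cong[where f="\<lambda>x. _ * x"], rule prod.cong[OF refl])
  fix m v assume "m \<in> Poly_Mapping.keys p" "v \<in> Poly_Mapping.keys m"
  then have "v \<in> indets p" unfolding indets_def by auto
  then show "\<sigma> v ^ Poly_Mapping.lookup m v = \<tau> v ^ Poly_Mapping.lookup m v" using assms by simp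
qed

lemma prod_single_one: "(\<Prod>v\<in>S. Poly_Mapping.single (g v) (1::'k::field)) = Poly_Mapping.single (\<Sum>v\<in>S. g v) 1"
  by (induction S rule: infinite_finite_induct) (simp_all add: mult_single)

lemma Var_power: "(Var v :: 'k::field mpoly) ^ k = Poly_Mapping.single (Poly_Mapping.single v k) 1"
proof (induction k)
  case (Suc k)
  then show ?case
    by (simp add: Var_def mult_single single_add[symmetric] add.commute)
qed simp

lemma mon_Var: "mon Var m = (Poly_Mapping.single m 1 :: 'k::field mpoly)"
proof -
  have "mon Var m = (\<Prod>v\<in>Poly_Mapping.keys m. Poly_Mapping.single (Poly_Mapping.single v (Poly_Mapping.lookup m v)) (1::'k))"
    unfolding mon_def Var_power ..
  also have "\<dots> = Poly_Mapping.single m 1"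
    by (simp add: prod_single_one pm_decomp[of m, symmetric])
  finally show ?thesis .
qed

lemma subst_Var_id[simp]: "subst Var p = p"
proof -
  have "subst Var p = (\<Sum>m\<in>Poly_Mapping.keys p. Poly_Mapping.single m (Poly_Mapping.lookup p m))"
    unfolding subst_mon mon_Var by (simp add: Const_def mult_single)
  then show ?thesis using pm_decomp[of p] by simp
qed

lemma indets_mon: "indets (mon \<sigma> m) \<subseteq> (\<Union>v\<in>Poly_Mapping.keys m. indets (\<sigma> v))"
proof -
  have "indets (mon \<sigma> m) \<subseteq> (\<Union>v\<in>Poly_Mapping.keys m. indets (\<sigma> v ^ Poly_Mapping.lookup m v))"
    unfolding mon_def by (rule indets_prod) simp
  also have "\<dots> \<subseteq> (\<Union>v\<in>Poly_Mapping.keys m. indets (\<sigma> v))"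
    using indets_power by (intro UN_mono) auto
  finally show ?thesis .
qed

lemma indets_subst:
  assumes "\<And>v. v \<in> indets p \<Longrightarrow> indets (\<sigma> v) \<subseteq> W"
  shows "indets (subst \<sigma> p) \<subseteq> W"
proof -
  have "indets (subst \<sigma> p) \<subseteq> (\<Union>m\<in>Poly_Mapping.keys p. indets (Const (Poly_Mapping.lookup p m) * mon \<sigma> m))"
    unfolding subst_mon by (rule indets_sum) simp
  also have "\<dots> \<subseteq> W"
  proof (rule UN_least)
    fix m assume m: "m \<in> Poly_Mapping.keys p"
    have "indets (Const (Poly_Mapping.lookup p m) * mon \<sigma> m) \<subseteq> indets (Const (Poly_Mapping.lookup p m)) \<union> indets (mon \<sigma> m)"
      by (rule indets_mult)
    also have "\<dots> \<subseteq> (\<Union>v\<in>Poly_Mapping.keys m. indets (\<sigma> v))" using indets_mon by simp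
    also have "\<dots> \<subseteq> W"
    proof (rule UN_least)
      fix v assume "v \<in> Poly_Mapping.keys m"
      with m have "v \<in> indets p" unfolding indets_def by auto
      then show "indets (\<sigma> v) \<subseteq> W" by (rule assms)
    qed
    finally show "indets (Const (Poly_Mapping.lookup p m) * mon \<sigma> m) \<subseteq> W" .
  qed
  finally show ?thesis .
qed

lemma polyring_induct[consumes 1, case_names Const Var add mult]:
  assumes p: "p \<in> carrier (polyring V)"
    and C: "\<And>c. P (Const c)"
    and Vr: "\<And>v. v \<in> V \<Longrightarrow> P (Var v)"
    and A: "\<And>p q. p \<in> carrier (polyring V) \<Longrightarrow> q \<in> carrier (polyring V) \<Longrightarrow> P p \<Longrightarrow> P q \<Longrightarrow> P (p + q)"
    and M: "\<And>p q. p \<in> carrier (polyring V) \<Longrightarrow> q \<in> carrier (polyring V) \<Longrightarrow> P p \<Longrightarrow> P q \<Longrightarrow> P (p * q)"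
  shows "P (p :: 'k::field mpoly)"
proof -
  define Q where "Q x \<longleftrightarrow> indets x \<subseteq> V \<and> P x" for x :: "'k mpoly"
  have QC: "Q (Const c)" for c using C by (simp add: Q_def)
  have QA: "Q x \<Longrightarrow> Q y \<Longrightarrow> Q (x + y)" for x y
    using A[of x y] indets_add[of x y] by (auto simp: Q_def)
  have QM: "Q x \<Longrightarrow> Q y \<Longrightarrow> Q (x * y)" for x y
    using M[of x y] indets_mult[of x y] by (auto simp: Q_def)
  have QS: "(\<And>i. i \<in> S \<Longrightarrow> Q (g i)) \<Longrightarrow> Q (\<Sum>i\<in>S. g i)" for S and g :: "'b \<Rightarrow> 'k mpoly"
  proof (induction S rule: infinite_finite_induct)
    case (infinite S) then show ?case using QC[of 0] by simp
  next
    case empty then show ?case using QC[of 0] by simp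
  next
    case (insert x F) then show ?case using QA by simp
  qed
  have QP: "(\<And>i. i \<in> S \<Longrightarrow> Q (g i)) \<Longrightarrow> Q (\<Prod>i\<in>S. g i)" for S and g :: "'b \<Rightarrow> 'k mpoly"
  proof (induction S rule: infinite_finite_induct)
    case (infinite S) then show ?case using QC[of 1] by simp
  next
    case empty then show ?case using QC[of 1] by simp
  next
    case (insert x F) then show ?case using QM by simp
  qed
  have QW: "Q x \<Longrightarrow> Q (x ^ k)" for x k
    by (induction k) (use QC[of 1] QM in simp_all)
  have QV: "v \<in> V \<Longrightarrow> Q (Var v)" for v using Vr by (simp add: Q_def)
  have "Q (subst Var p)"
    unfolding subst_mon
  proof (rule QS, rule QM[OF QC], unfold mon_def, rule QP, rule QW, rule QV)
    fix m v assume "m \<in> Poly_Mapping.keys p" "v \<in> Poly_Mapping.keys m"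
    then have "v \<in> indets p" unfolding indets_def by auto
    then show "v \<in> V" using p by auto
  qed
  then show ?thesis by (simp add: Q_def)
qed

lemma subst_subst: "subst \<sigma> (subst \<tau> p) = subst (\<lambda>v. subst \<sigma> (\<tau> v)) p"
proof -
  have "p \<in> carrier (polyring UNIV)" by simp
  then show ?thesis
    by (induction rule: polyring_induct) (simp_all add: subst_add subst_mult)
qed

lemma Var_carrier: "v \<in> V \<Longrightarrow> (Var v :: 'k::field mpoly) \<in> carrier (polyring V)" by simp
lemma Const_carrier: "(Const c :: 'k::field mpoly) \<in> carrier (polyring V)" by simp

lemma subst_carrier:
  assumes "p \<in> carrier (polyring V)" "\<And>v. v \<in> V \<Longrightarrow> \<sigma> v \<in> carrier (polyring W)"
  shows "subst \<sigma> p \<in> carrier (polyring W)"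
  using indets_subst[of p \<sigma> W] assms by auto

lemma ring_polyring: "ring (polyring V :: 'k::field mpoly ring)"
  by (rule cring.axioms(1)[OF cring_polyring])

lemma subst_ring_hom:
  assumes "\<And>v. v \<in> V \<Longrightarrow> \<sigma> v \<in> carrier (polyring W)"
  shows "subst \<sigma> \<in> ring_hom (polyring V :: 'k::field mpoly ring) (polyring W)"
proof (rule ring_hom_memI)
  show "subst \<sigma> x \<in> carrier (polyring W)" if "x \<in> carrier (polyring V)" for x
    by (rule subst_carrier[OF that assms])
qed (simp_all add: subst_add subst_mult)

context
  fixes I :: "'k::field mpoly set" and V :: "nat set"
  assumes I: "ideal I (polyring V)"
begin

lemma I_sub: "x \<in> I \<Longrightarrow> x \<in> carrier (polyring V)"
  using additive_subgroup.a_subset[OF ideal.axioms(1)[OF I]] by auto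

lemma I_add: "x \<in> I \<Longrightarrow> y \<in> I \<Longrightarrow> x + y \<in> I"
  using additive_subgroup.a_closed[OF ideal.axioms(1)[OF I]] by fastforce

lemma I_0: "0 \<in> I"
  using additive_subgroup.zero_closed[OF ideal.axioms(1)[OF I]] by fastforce

lemma I_uminus: "x \<in> I \<Longrightarrow> - x \<in> I"
  using additive_subgroup.a_inv_closed[OF ideal.axioms(1)[OF I], of x] I_sub[of x] a_inv_polyring[of x V] by simp

lemma I_diff: "x \<in> I \<Longrightarrow> y \<in> I \<Longrightarrow> x - y \<in> I"
  using I_add[of x "-y"] I_uminus[of y] by simp

lemma I_mult_left: "x \<in> I \<Longrightarrow> y \<in> carrier (polyring V) \<Longrightarrow> y * x \<in> I"
  using ideal.I_l_closed[OF I, of x y] by simp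

lemma I_mult_right: "x \<in> I \<Longrightarrow> y \<in> carrier (polyring V) \<Longrightarrow> x * y \<in> I"
  using ideal.I_r_closed[OF I, of x y] by simp

lemma I_cong: "x - y \<in> I \<Longrightarrow> y \<in> I \<Longrightarrow> x \<in> I"
  using I_add[of "x - y" y] by simp

lemma rcos_mem: "x \<in> carrier (polyring V) \<Longrightarrow> y \<in> I +>\<^bsub>polyring V\<^esub> x \<longleftrightarrow> y - x \<in> I"
proof
  assume "y \<in> I +>\<^bsub>polyring V\<^esub> x"
  then obtain h where "h \<in> I" "y = h + x" unfolding a_r_coset_def r_coset_def by auto
  then show "y - x \<in> I" by simp
next
  assume "y - x \<in> I"
  then show "y \<in> I +>\<^bsub>polyring V\<^esub> x" unfolding a_r_coset_def r_coset_def
    by (auto intro!: bexI[of _ "y - x"])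
qed

lemma rcos_self: "x \<in> carrier (polyring V) \<Longrightarrow> x \<in> I +>\<^bsub>polyring V\<^esub> x"
  using rcos_mem[of x x] I_0 by simp

lemma rcos_eq_iff:
  assumes x: "x \<in> carrier (polyring V)" and y: "y \<in> carrier (polyring V)"
  shows "(I +>\<^bsub>polyring V\<^esub> x = I +>\<^bsub>polyring V\<^esub> y) \<longleftrightarrow> x - y \<in> I"
proof
  assume "I +>\<^bsub>polyring V\<^esub> x = I +>\<^bsub>polyring V\<^esub> y"
  then have "x \<in> I +>\<^bsub>polyring V\<^esub> y" using rcos_self[OF x] by simp
  then show "x - y \<in> I" using rcos_mem[OF y] by simp
next
  assume d: "x - y \<in> I"
  have 1: "z \<in> I +>\<^bsub>polyring V\<^esub> y" if "z \<in> I +>\<^bsub>polyring V\<^esub> x" for z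
  proof -
    have "z - x \<in> I" using that rcos_mem[OF x] by simp
    then have "(z - x) + (x - y) \<in> I" using d by (rule I_add)
    then show ?thesis using rcos_mem[OF y] by simp
  qed
  have 2: "z \<in> I +>\<^bsub>polyring V\<^esub> x" if "z \<in> I +>\<^bsub>polyring V\<^esub> y" for z
  proof -
    have "z - y \<in> I" using that rcos_mem[OF y] by simp
    then have "(z - y) - (x - y) \<in> I" using d by (rule I_diff)
    then show ?thesis using rcos_mem[OF x] by simp
  qed
  show "I +>\<^bsub>polyring V\<^esub> x = I +>\<^bsub>polyring V\<^esub> y" using 1 2 by auto
qed

lemma rcos_eq_I_iff: "x \<in> carrier (polyring V) \<Longrightarrow> (I +>\<^bsub>polyring V\<^esub> x = I) \<longleftrightarrow> x \<in> I"
proof -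
  have "I +>\<^bsub>polyring V\<^esub> 0 = I" using rcos_mem[of 0] by auto
  moreover assume "x \<in> carrier (polyring V)"
  ultimately show ?thesis using rcos_eq_iff[of x 0] by simp
qed

lemma quot_carrier: "carrier (polyring V Quot I) = {I +>\<^bsub>polyring V\<^esub> x | x. x \<in> carrier (polyring V)}"
  unfolding FactRing_def A_RCOSETS_def' by auto

lemma rcos_hom: "(\<lambda>x. I +>\<^bsub>polyring V\<^esub> x) \<in> ring_hom (polyring V) (polyring V Quot I)"
  using ideal.rcos_ring_hom[OF I] by simp

lemma quot_ring: "ring (polyring V Quot I)"
  using ideal.quotient_is_ring[OF I] .

end

lemma quot_hom:
  assumes J: "ideal J (polyring W)" and \<sigma>: "\<And>v. v \<in> V \<Longrightarrow> \<sigma> v \<in> carrier (polyring W)"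
  shows "(\<lambda>p. J +>\<^bsub>polyring W\<^esub> subst \<sigma> p) \<in> ring_hom (polyring V :: 'k::field mpoly ring) (polyring W Quot J)"
proof -
  have "(\<lambda>x. J +>\<^bsub>polyring W\<^esub> x) \<circ> subst \<sigma> \<in> ring_hom (polyring V :: 'k::field mpoly ring) (polyring W Quot J)"
    by (rule ring_hom_trans[OF subst_ring_hom[OF \<sigma>] rcos_hom[OF J]])
  then show ?thesis by (simp add: comp_def)
qed

lemma quot_iso:
  fixes I :: "'k::field mpoly set"
  assumes I: "ideal I (polyring V)"
    and \<sigma>: "\<And>v. v \<in> V \<Longrightarrow> \<sigma> v \<in> carrier (polyring W)"
    and \<tau>: "\<And>w. w \<in> W \<Longrightarrow> \<tau> w \<in> carrier (polyring V)"
    and bk: "\<And>p. p \<in> carrier (polyring V) \<Longrightarrow> subst \<tau> (subst \<sigma> p) - p \<in> I"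
    and fw: "\<And>q. q \<in> carrier (polyring W) \<Longrightarrow> subst \<sigma> (subst \<tau> q) = q"
    and J_def: "J = {q \<in> carrier (polyring W). subst \<tau> q \<in> I}"
  shows "ideal J (polyring W) \<and> (\<exists>h. kalg_iso V I W J h \<and>
      (\<forall>p\<in>carrier (polyring V). h (I +>\<^bsub>polyring V\<^esub> p) = J +>\<^bsub>polyring W\<^esub> subst \<sigma> p))"
proof -
  let ?psi' = "\<lambda>q. I +>\<^bsub>polyring V\<^esub> subst \<tau> q"
  have hom': "?psi' \<in> ring_hom (polyring W) (polyring V Quot I)"
    by (rule quot_hom[OF I \<tau>])
  have "ring_hom_ring (polyring W) (polyring V Quot I) ?psi'"
    by (rule ring_hom_ringI2[OF ring_polyring quot_ring[OF I] hom'])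
  then have kid: "ideal (a_kernel (polyring W) (polyring V Quot I) ?psi') (polyring W)"
    by (rule ring_hom_ring.kernel_is_ideal)
  have "a_kernel (polyring W) (polyring V Quot I) ?psi' = J"
  proof -
    have "q \<in> carrier (polyring W) \<Longrightarrow> ?psi' q = I \<longleftrightarrow> subst \<tau> q \<in> I" for q
      by (rule rcos_eq_I_iff[OF I], rule subst_carrier[OF _ \<tau>])
    then show ?thesis unfolding a_kernel_def' J_def by (auto simp: FactRing_def)
  qed
  with kid have J: "ideal J (polyring W)" by simp
  let ?psi = "\<lambda>p. J +>\<^bsub>polyring W\<^esub> subst \<sigma> p"
  have hom: "?psi \<in> ring_hom (polyring V) (polyring W Quot J)"
    by (rule quot_hom[OF J \<sigma>])
  have hr: "ring_hom_ring (polyring V) (polyring W Quot J) ?psi"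
    by (rule ring_hom_ringI2[OF ring_polyring quot_ring[OF J] hom])
  have ker: "a_kernel (polyring V) (polyring W Quot J) ?psi = I"
  proof -
    have "?psi p = J \<longleftrightarrow> p \<in> I" if p: "p \<in> carrier (polyring V)" for p
    proof -
      have sp: "subst \<sigma> p \<in> carrier (polyring W)" by (rule subst_carrier[OF p \<sigma>])
      have "?psi p = J \<longleftrightarrow> subst \<sigma> p \<in> J" by (rule rcos_eq_I_iff[OF J sp])
      also have "\<dots> \<longleftrightarrow> subst \<tau> (subst \<sigma> p) \<in> I" using sp J_def by simp
      also have "\<dots> \<longleftrightarrow> p \<in> I"
      proof
        assume "subst \<tau> (subst \<sigma> p) \<in> I"
        then have "subst \<tau> (subst \<sigma> p) - (subst \<tau> (subst \<sigma> p) - p) \<in> I"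
          using bk[OF p] by (rule I_diff[OF I])
        then show "p \<in> I" by simp
      next
        assume "p \<in> I"
        then show "subst \<tau> (subst \<sigma> p) \<in> I" using bk[OF p] I_add[OF I] by fastforce
      qed
      finally show ?thesis .
    qed
    then show ?thesis unfolding a_kernel_def' using I_sub[OF I] by (auto simp: FactRing_def)
  qed
  have surj: "?psi ` carrier (polyring V) = carrier (polyring W Quot J)"
  proof
    show "?psi ` carrier (polyring V) \<subseteq> carrier (polyring W Quot J)"
      using ring_hom_memE(1)[OF hom] by auto
    show "carrier (polyring W Quot J) \<subseteq> ?psi ` carrier (polyring V)"
    proof
      fix X assume "X \<in> carrier (polyring W Quot J)"
      then obtain q where q: "q \<in> carrier (polyring W)" "X = J +>\<^bsub>polyring W\<^esub> q"
        using quot_carrier[OF J] by auto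
      have "X = ?psi (subst \<tau> q)" using q fw by simp
      moreover have "subst \<tau> q \<in> carrier (polyring V)" by (rule subst_carrier[OF q(1) \<tau>])
      ultimately show "X \<in> ?psi ` carrier (polyring V)" by blast
    qed
  qed
  define h where "h = (\<lambda>X. the_elem (?psi ` X))"
  have iso: "h \<in> ring_iso (polyring V Quot I) (polyring W Quot J)"
    using ring_hom_ring.FactRing_iso_set[OF hr surj] unfolding ker h_def .
  have val: "h (I +>\<^bsub>polyring V\<^esub> p) = ?psi p" if "p \<in> carrier (polyring V)" for p
    using ring_hom_ring.the_elem_simp[OF hr that] unfolding ker h_def .
  have "kalg_iso V I W J h"
    unfolding kalg_iso_def using iso val[of "Const c" for c] by simp
  with J val show ?thesis by blast
qed

lemma indets_tail_sub: "indets (tail z f) \<subseteq> {z} \<union> indets f"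
  unfolding tail_def
  using indets_diff[of "Var z" "Const (1 / coeffVar z f) * f"] indets_mult[of "Const (1 / coeffVar z f)" f]
  by auto

locale sepsetup =
  fixes n s :: nat and z :: "nat \<Rightarrow> nat" and f :: "nat \<Rightarrow> 'k::field mpoly"
    and I :: "'k mpoly set"
  assumes I_ideal: "ideal I (polyring {..<n})"
    and z_inj: "inj_on z {..<s}"
    and z_X: "z ` {..<s} \<subseteq> {..<n}"
    and f_I: "\<forall>i<s. f i \<in> I"
    and f_sep: "coherently_separating {..<n} s z f"
begin

abbreviation "X \<equiv> {..<n}"
abbreviation "Z \<equiv> z ` {..<s}"
abbreviation "Xh \<equiv> {..<n} - z ` {..<s}"
abbreviation "\<sigma> \<equiv> sep_subst s z f"

lemma f_M: "i < s \<Longrightarrow> f i \<in> maxideal X" using f_sep unfolding coherently_separating_def by blast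
lemma f_carrier: "i < s \<Longrightarrow> f i \<in> carrier (polyring X)" using f_M unfolding maxideal_def by blast
lemma f_sepi: "i < s \<Longrightarrow> separating (z i) (f i)" using f_sep unfolding coherently_separating_def by blast
lemma f_coh: "i < s \<Longrightarrow> j < s \<Longrightarrow> j \<noteq> i \<Longrightarrow> z i \<notin> indets (f j)"
  using f_sep unfolding coherently_separating_def by blast

lemma sigma_z: "i < s \<Longrightarrow> \<sigma> (z i) = tail (z i) (f i)"
proof -
  assume i: "i < s"
  have "(THE j. j < s \<and> z j = z i) = i"
    by (rule the_equality) (use i z_inj in \<open>auto dest: inj_onD\<close>)
  then show ?thesis unfolding sep_subst_def using i by auto
qed

lemma sigma_notZ: "v \<notin> Z \<Longrightarrow> \<sigma> v = Var v"
  unfolding sep_subst_def by auto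

lemma tail_carrier: "i < s \<Longrightarrow> tail (z i) (f i) \<in> carrier (polyring Xh)"
proof -
  assume i: "i < s"
  have sub: "indets (tail (z i) (f i)) \<subseteq> {z i} \<union> indets (f i)" by (rule indets_tail_sub)
  have "indets (f i) \<subseteq> X" using f_carrier[OF i] by simp
  moreover have "z i \<notin> indets (tail (z i) (f i))" using f_sepi[OF i] unfolding separating_def by simp
  moreover have "z j \<notin> indets (tail (z i) (f i))" if j: "j < s" "j \<noteq> i" for j
  proof -
    have "z j \<noteq> z i" using j i z_inj by (auto dest: inj_onD)
    moreover have "z j \<notin> indets (f i)" using f_coh[OF j(1) i] j by simp
    ultimately show ?thesis using sub by auto
  qed
  moreover have "z i \<in> X" using z_X i by auto
  ultimately show ?thesis using sub by auto
qed

lemma sigma_carrier: "v \<in> X \<Longrightarrow> \<sigma> v \<in> carrier (polyring Xh)"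
proof (cases "v \<in> Z")
  case True
  then obtain i where "i < s" "v = z i" by auto
  then show ?thesis using sigma_z tail_carrier by simp
next
  case False
  moreover assume "v \<in> X"
  ultimately show ?thesis using sigma_notZ by simp
qed

lemma sigma_back: "p \<in> carrier (polyring X) \<Longrightarrow> subst \<sigma> p - p \<in> I"
proof (induction p rule: polyring_induct)
  case (Const c)
  then show ?case using I_0[OF I_ideal] by simp
next
  case (Var v)
  show ?case
  proof (cases "v \<in> Z")
    case True
    then obtain i where i: "i < s" "v = z i" by auto
    have "Const (1 / coeffVar (z i) (f i)) * f i \<in> I"
      by (rule I_mult_left[OF I_ideal]) (use f_I i in auto)
    then have "- (Const (1 / coeffVar (z i) (f i)) * f i) \<in> I" by (rule I_uminus[OF I_ideal])
    then show ?thesis using i sigma_z[OF i(1)] by (simp add: tail_def)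
  next
    case False
    then show ?thesis using sigma_notZ I_0[OF I_ideal] by simp
  qed
next
  case (add p q)
  have "(subst \<sigma> p - p) + (subst \<sigma> q - q) \<in> I" using add by (intro I_add[OF I_ideal])
  then show ?case by (simp add: subst_add algebra_simps)
next
  case (mult p q)
  have sq: "subst \<sigma> q \<in> carrier (polyring X)"
    using subst_carrier[OF mult(2), of \<sigma> X] sigma_carrier by auto
  have "(subst \<sigma> p - p) * subst \<sigma> q + p * (subst \<sigma> q - q) \<in> I"
    by (intro I_add[OF I_ideal] I_mult_right[OF I_ideal] I_mult_left[OF I_ideal] mult sq)
  then show ?case by (simp add: subst_mult algebra_simps)
qed

lemma sigma_fix: "q \<in> carrier (polyring Xh) \<Longrightarrow> subst \<sigma> q = q"
proof -
  assume q: "q \<in> carrier (polyring Xh)"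
  have "subst \<sigma> q = subst Var q" by (rule subst_cong) (use q sigma_notZ in auto)
  then show ?thesis by simp
qed

lemma reembed:
  "\<exists>h. kalg_iso X I Xh (I \<inter> carrier (polyring Xh)) h \<and>
     (\<forall>p\<in>carrier (polyring X). h (I +>\<^bsub>polyring X\<^esub> p) =
        (I \<inter> carrier (polyring Xh)) +>\<^bsub>polyring Xh\<^esub> subst \<sigma> p)"
proof -
  have J: "I \<inter> carrier (polyring Xh) = {q \<in> carrier (polyring Xh). subst Var q \<in> I}" by auto
  have bk: "\<And>p. p \<in> carrier (polyring X) \<Longrightarrow> subst Var (subst \<sigma> p) - p \<in> I" using sigma_back by simp
  have fw: "\<And>q. q \<in> carrier (polyring Xh) \<Longrightarrow> subst \<sigma> (subst Var q) = q" using sigma_fix by simp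
  have tv: "\<And>w. w \<in> Xh \<Longrightarrow> (Var w :: 'k mpoly) \<in> carrier (polyring X)" by auto
  show ?thesis
    using quot_iso[OF I_ideal sigma_carrier tv bk fw J] by blast
qed

lemma card_Xh: "card Xh = n - s"
proof -
  have "card Z = s" using card_image[OF z_inj] by simp
  then show ?thesis using card_Diff_subset[of Z X] z_X by simp
qed

lemma edim_witness: "\<exists>J h. ideal J (polyring {..<n-s}) \<and> kalg_iso X I {..<n-s} J h"
proof -
  obtain \<rho> where \<rho>: "bij_betw \<rho> Xh {..<n-s}"
    using bij_betw_iff_card[of Xh "{..<n-s}"] card_Xh by auto
  define \<rho>i where "\<rho>i = inv_into Xh \<rho>"
  have \<rho>i: "bij_betw \<rho>i {..<n-s} Xh" unfolding \<rho>i_def by (rule bij_betw_inv_into[OF \<rho>])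
  have \<rho>\<rho>i: "w \<in> {..<n-s} \<Longrightarrow> \<rho> (\<rho>i w) = w" for w
    unfolding \<rho>i_def using \<rho> by (simp add: bij_betw_def f_inv_into_f)
  have \<rho>i\<rho>: "u \<in> Xh \<Longrightarrow> \<rho>i (\<rho> u) = u" for u
    unfolding \<rho>i_def using \<rho> by (simp add: bij_betw_def inv_into_f_f)
  define \<sigma>' where "\<sigma>' v = subst (\<lambda>u. Var (\<rho> u)) (\<sigma> v)" for v
  define \<tau>' where "\<tau>' w = (Var (\<rho>i w) :: 'k mpoly)" for w
  have s1: "\<sigma>' v \<in> carrier (polyring {..<n-s})" if v: "v \<in> X" for v
    unfolding \<sigma>'_def
  proof (rule subst_carrier[OF sigma_carrier[OF v]])
    fix u assume "u \<in> Xh"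
    then have "\<rho> u \<in> {..<n-s}" using bij_betwE[OF \<rho>] by blast
    then show "(Var (\<rho> u) :: 'k mpoly) \<in> carrier (polyring {..<n-s})" by simp
  qed
  have t1: "\<tau>' w \<in> carrier (polyring X)" if "w \<in> {..<n-s}" for w
  proof -
    have "\<rho>i w \<in> Xh" using bij_betwE[OF \<rho>i] that by blast
    then show ?thesis unfolding \<tau>'_def by simp
  qed
  have bk: "subst \<tau>' (subst \<sigma>' p) - p \<in> I" if p: "p \<in> carrier (polyring X)" for p
  proof -
    have "subst \<tau>' (subst \<sigma>' p) = subst (\<lambda>v. subst \<tau>' (\<sigma>' v)) p" by (rule subst_subst)
    also have "\<dots> = subst \<sigma> p"
    proof (rule subst_cong)
      fix v assume "v \<in> indets p"
      then have v: "v \<in> X" using p by auto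
      have "subst \<tau>' (\<sigma>' v) = subst (\<lambda>u. subst \<tau>' (Var (\<rho> u))) (\<sigma> v)"
        unfolding \<sigma>'_def by (rule subst_subst)
      also have "\<dots> = subst Var (\<sigma> v)"
      proof (rule subst_cong)
        fix u assume "u \<in> indets (\<sigma> v)"
        then have "u \<in> Xh" using sigma_carrier[OF v] by auto
        then show "subst \<tau>' (Var (\<rho> u)) = Var u" by (simp add: \<tau>'_def \<rho>i\<rho>)
      qed
      finally show "subst \<tau>' (\<sigma>' v) = \<sigma> v" by simp
    qed
    finally show ?thesis using sigma_back[OF p] by simp
  qed
  have fw: "subst \<sigma>' (subst \<tau>' q) = q" if q: "q \<in> carrier (polyring {..<n-s})" for q
  proof -
    have "subst \<sigma>' (subst \<tau>' q) = subst (\<lambda>w. subst \<sigma>' (\<tau>' w)) q" by (rule subst_subst)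
    also have "\<dots> = subst Var q"
    proof (rule subst_cong)
      fix w assume "w \<in> indets q"
      then have w: "w \<in> {..<n-s}" using q by auto
      then have "\<rho>i w \<in> Xh" using bij_betwE[OF \<rho>i] by blast
      then have "\<sigma> (\<rho>i w) = Var (\<rho>i w)" using sigma_notZ by simp
      then show "subst \<sigma>' (\<tau>' w) = Var w" by (simp add: \<tau>'_def \<sigma>'_def \<rho>\<rho>i[OF w])
    qed
    finally show ?thesis by simp
  qed
  show ?thesis
    using quot_iso[OF I_ideal s1 t1 bk fw refl] by blast
qed

end

abbreviation lk :: "'k::field mpoly \<Rightarrow> (nat \<Rightarrow>\<^sub>0 nat) \<Rightarrow> 'k" where "lk \<equiv> Poly_Mapping.lookup"

lemma lookup_mult_decomp:
  "lk (f * g) k = (\<Sum>a\<in>Poly_Mapping.keys f. \<Sum>b\<in>Poly_Mapping.keys g. if a + b = k then lk f a * lk g b else 0)"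
proof -
  have "f * g = (\<Sum>a\<in>Poly_Mapping.keys f. Poly_Mapping.single a (lk f a)) * (\<Sum>b\<in>Poly_Mapping.keys g. Poly_Mapping.single b (lk g b))"
    using pm_decomp[of f] pm_decomp[of g] by simp
  also have "\<dots> = (\<Sum>a\<in>Poly_Mapping.keys f. \<Sum>b\<in>Poly_Mapping.keys g. Poly_Mapping.single (a + b) (lk f a * lk g b))"
    by (simp add: sum_product mult_single)
  finally show ?thesis by (simp add: lookup_sum lookup_single when_def)
qed

lemma pm_add_eq_0: "(a::nat \<Rightarrow>\<^sub>0 nat) + b = 0 \<longleftrightarrow> a = 0 \<and> b = 0"
proof
  assume "a + b = 0"
  then have "Poly_Mapping.lookup a v = 0 \<and> Poly_Mapping.lookup b v = 0" for v
    by (metis add_is_0 lookup_add lookup_zero)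
  then show "a = 0 \<and> b = 0" by (auto intro: poly_mapping_eqI)
qed simp

lemma pm_add_eq_single: "(a::nat \<Rightarrow>\<^sub>0 nat) + b = Poly_Mapping.single w 1 \<longleftrightarrow>
   (a = 0 \<and> b = Poly_Mapping.single w 1) \<or> (a = Poly_Mapping.single w 1 \<and> b = 0)"
proof
  assume ab: "a + b = Poly_Mapping.single w 1"
  have v: "Poly_Mapping.lookup a v = 0 \<and> Poly_Mapping.lookup b v = 0" if "v \<noteq> w" for v
    using arg_cong[OF ab, of "\<lambda>m. Poly_Mapping.lookup m v"] that by (simp add: lookup_add lookup_single)
  have w: "Poly_Mapping.lookup a w + Poly_Mapping.lookup b w = 1"
    using arg_cong[OF ab, of "\<lambda>m. Poly_Mapping.lookup m w"] by (simp add: lookup_add)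
  show "(a = 0 \<and> b = Poly_Mapping.single w 1) \<or> (a = Poly_Mapping.single w 1 \<and> b = 0)"
  proof (cases "Poly_Mapping.lookup a w = 0")
    case True
    then have "a = 0" using v by (intro poly_mapping_eqI) (metis lookup_zero)
    then show ?thesis using ab by simp
  next
    case False
    then have "Poly_Mapping.lookup b w = 0" using w by simp
    then have "b = 0" using v by (intro poly_mapping_eqI) (metis lookup_zero)
    then show ?thesis using ab by simp
  qed
qed auto

lemma lookup_mult_0: "lk (f * g) 0 = lk f 0 * lk g 0"
proof -
  have "lk (f * g) 0 = (\<Sum>a\<in>Poly_Mapping.keys f. if a = 0 then (\<Sum>b\<in>Poly_Mapping.keys g. if b = 0 then lk f a * lk g b else 0) else 0)"
    unfolding lookup_mult_decomp pm_add_eq_0 by (intro sum.cong) auto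
  also have "\<dots> = lk f 0 * lk g 0"
    by (simp add: in_keys_iff)
  finally show ?thesis .
qed

lemma lookup_mult_lin: "lk (f * g) (Poly_Mapping.single w 1) =
   lk f 0 * lk g (Poly_Mapping.single w 1) + lk f (Poly_Mapping.single w 1) * lk g 0"
proof -
  let ?k = "Poly_Mapping.single w (1::nat)"
  have k0: "?k \<noteq> 0" by (metis lookup_single_eq lookup_zero one_neq_zero)
  have "lk (f * g) ?k = (\<Sum>a\<in>Poly_Mapping.keys f. (if a = 0 then (\<Sum>b\<in>Poly_Mapping.keys g. if b = ?k then lk f a * lk g b else 0) else 0)
      + (if a = ?k then (\<Sum>b\<in>Poly_Mapping.keys g. if b = 0 then lk f a * lk g b else 0) else 0))"
    unfolding lookup_mult_decomp pm_add_eq_single using k0 by (intro sum.cong) auto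
  also have "\<dots> = lk f 0 * lk g ?k + lk f ?k * lk g 0"
    by (simp add: sum.distrib in_keys_iff)
  finally show ?thesis .
qed

lemma mdeg_single[simp]: "mdeg (Poly_Mapping.single w 1) = 1"
  by (simp add: mdeg_def)
lemma mdeg_single'[simp]: "mdeg (Poly_Mapping.single w (Suc 0)) = Suc 0"
  using mdeg_single[of w] by simp

lemma mdeg_1: "mdeg m = 1 \<longleftrightarrow> (\<exists>w. m = Poly_Mapping.single w 1)"
proof
  assume d: "mdeg m = 1"
  then have ne: "Poly_Mapping.keys m \<noteq> {}" by (auto simp: mdeg_def)
  obtain w where w: "w \<in> Poly_Mapping.keys m" using ne by (meson ex_in_conv)
  have fin: "finite (Poly_Mapping.keys m)" by simp
  have "mdeg m = Poly_Mapping.lookup m w + (\<Sum>v\<in>Poly_Mapping.keys m - {w}. Poly_Mapping.lookup m v)"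
    unfolding mdeg_def using sum.remove[OF fin w] .
  moreover have "Poly_Mapping.lookup m w \<ge> 1" using w by (simp add: in_keys_iff)
  ultimately have mw: "Poly_Mapping.lookup m w = 1" and rest: "(\<Sum>v\<in>Poly_Mapping.keys m - {w}. Poly_Mapping.lookup m v) = 0"
    using d by auto
  have "Poly_Mapping.keys m - {w} = {}"
  proof (rule ccontr)
    assume "Poly_Mapping.keys m - {w} \<noteq> {}"
    then obtain u where u: "u \<in> Poly_Mapping.keys m - {w}" by auto
    then have "Poly_Mapping.lookup m u = 0" using rest fin by simp
    then show False using u by (simp add: in_keys_iff)
  qed
  then have zv: "Poly_Mapping.lookup m v = 0" if "v \<noteq> w" for v using that by (auto simp: in_keys_iff)
  then have "m = Poly_Mapping.single w 1"
  proof (intro poly_mapping_eqI)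
    fix k
    show "Poly_Mapping.lookup m k = Poly_Mapping.lookup (Poly_Mapping.single w 1) k"
      using zv mw by (cases "k = w") (simp_all add: lookup_single_not_eq)
  qed
  then show "\<exists>w. m = Poly_Mapping.single w 1" ..
qed (auto simp: mdeg_single)

lemma lookup_Lin: "lk (Lin f) m = (if mdeg m = 1 then lk f m else 0)"
proof -
  have "finite {m. (if mdeg m = 1 then lk f m else 0) \<noteq> 0}"
    by (rule finite_subset[of _ "Poly_Mapping.keys f"]) (auto simp: in_keys_iff)
  then show ?thesis unfolding Lin_def by simp
qed

lemma Lin_add: "Lin (f + g) = Lin f + Lin g"
  by (rule poly_mapping_eqI) (simp add: lookup_Lin lookup_add)

lemma Lin_uminus: "Lin (- f) = - Lin f"
  by (rule poly_mapping_eqI) (simp add: lookup_Lin)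

lemma Lin_diff: "Lin (f - g) = Lin f - Lin g"
  by (rule poly_mapping_eqI) (simp add: lookup_Lin lookup_minus)

lemma Lin_Const_mult: "Lin (Const c * f) = Const c * Lin f"
  by (rule poly_mapping_eqI) (simp add: lookup_Lin lookup_Const_mult)

lemma Lin_Const[simp]: "Lin (Const c) = 0"
  by (rule poly_mapping_eqI) (simp add: lookup_Lin lookup_Const mdeg_def)

lemma lookup_Var: "lk (Var v) m = (if m = Poly_Mapping.single v 1 then 1 else 0)"
  by (simp add: Var_def lookup_single when_def eq_commute)

lemma Lin_Var[simp]: "Lin (Var v) = Var v"
  by (rule poly_mapping_eqI) (auto simp: lookup_Lin lookup_Var mdeg_single)

lemma Lin_mult: "Lin (f * g) = Const (lk f 0) * Lin g + Const (lk g 0) * Lin f"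
proof (rule poly_mapping_eqI)
  fix m
  show "lk (Lin (f * g)) m = lk (Const (lk f 0) * Lin g + Const (lk g 0) * Lin f) m"
  proof (cases "mdeg m = 1")
    case True
    then obtain w where m: "m = Poly_Mapping.single w 1" using mdeg_1 by blast
    have "lk (f*g) m = lk f 0 * lk g m + lk f m * lk g 0" unfolding m by (rule lookup_mult_lin)
    then show ?thesis using True
      by (simp add: lookup_Lin lookup_add lookup_Const_mult)
  next
    case False
    then show ?thesis by (simp add: lookup_Lin lookup_add lookup_Const_mult)
  qed
qed

lemma coeffVar_mult: "coeffVar w (f * g) = lk f 0 * coeffVar w g + coeffVar w f * lk g 0"
  unfolding coeffVar_def by (rule lookup_mult_lin)

lemma single_Suc0_nz[simp]: "Poly_Mapping.single w (Suc 0) \<noteq> (0 :: nat \<Rightarrow>\<^sub>0 nat)"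
  by (metis lookup_single_eq lookup_zero nat.distinct(1))
lemma single_Suc0_eq[simp]: "Poly_Mapping.single w (Suc 0) = (Poly_Mapping.single v (Suc 0) :: nat \<Rightarrow>\<^sub>0 nat) \<longleftrightarrow> w = v"
  by (metis lookup_single_eq lookup_single_not_eq nat.distinct(1))

lemma coeffVar_Const[simp]: "coeffVar w (Const c) = 0"
  by (simp add: coeffVar_def lookup_Const)
lemma coeffVar_Var: "coeffVar w (Var v) = (if w = v then 1 else 0)"
  by (simp add: coeffVar_def lookup_Var)
lemma coeffVar_add: "coeffVar w (p + q) = coeffVar w p + coeffVar w q"
  by (simp add: coeffVar_def lookup_add)
lemma lk0_Const[simp]: "lk (Const c) 0 = c" by (simp add: lookup_Const)
lemma lk0_Var[simp]: "lk (Var v) 0 = 0" by (simp add: lookup_Var)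

lemma chain:
  assumes q: "q \<in> carrier (polyring W)" and W: "finite W" and \<sigma>0: "\<And>w. lk (\<sigma> w) 0 = 0"
  shows "lk (subst \<sigma> q) 0 = lk q 0 \<and> Lin (subst \<sigma> q) = (\<Sum>w\<in>W. Const (coeffVar w q) * Lin (\<sigma> w))"
  using q
proof (induction q rule: polyring_induct)
  case (Const c)
  then show ?case by simp
next
  case (Var v)
  have "\<And>w. Const (coeffVar w (Var v)) * Lin (\<sigma> w) = (if w = v then Lin (\<sigma> v) else 0)"
    by (simp add: coeffVar_Var)
  then have "(\<Sum>w\<in>W. Const (coeffVar w (Var v)) * Lin (\<sigma> w)) = Lin (\<sigma> v)"
    using Var W by simp
  then show ?case using \<sigma>0 by simp
next
  case (add p q)
  then show ?case
    by (simp add: subst_add Lin_add lookup_add coeffVar_add Const_add distrib_right sum.distrib)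
next
  case (mult p q)
  have l0: "lk (subst \<sigma> (p * q)) 0 = lk (p * q) 0"
    using mult by (simp add: subst_mult lookup_mult_0)
  have "Lin (subst \<sigma> (p * q)) = Const (lk p 0) * Lin (subst \<sigma> q) + Const (lk q 0) * Lin (subst \<sigma> p)"
    using mult by (simp add: subst_mult Lin_mult)
  also have "\<dots> = (\<Sum>w\<in>W. Const (coeffVar w (p * q)) * Lin (\<sigma> w))"
    using mult by (simp add: coeffVar_mult Const_add Const_mult sum_distrib_left sum.distrib[symmetric]
        algebra_simps)
  finally show ?case using l0 by simp
qed

lemma vs: "vector_space (kscale :: 'k::field \<Rightarrow> 'k mpoly \<Rightarrow> 'k mpoly)"
  by unfold_locales (simp_all add: kscale_def distrib_left distrib_right Const_add Const_mult mult.assoc)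

lemma Lin_in_span:
  assumes f: "f \<in> carrier (polyring V)" and V: "finite V"
  shows "Lin f \<in> module.span kscale (Var ` V)"
proof -
  interpret vector_space "kscale :: 'k::field \<Rightarrow> 'k mpoly \<Rightarrow> 'k mpoly" by (rule vs)
  have eq: "Lin f = (\<Sum>v\<in>V. kscale (coeffVar v f) (Var v))"
  proof (rule poly_mapping_eqI)
    fix m
    show "lk (Lin f) m = lk (\<Sum>v\<in>V. kscale (coeffVar v f) (Var v)) m"
    proof (cases "mdeg m = 1")
      case True
      then obtain w where m: "m = Poly_Mapping.single w 1" using mdeg_1 by blast
      have "(\<Sum>v\<in>V. coeffVar v f * (if m = Poly_Mapping.single v 1 then 1 else 0)) = (if w \<in> V then coeffVar w f else 0)"
        unfolding m using V by (simp add: if_distrib cong: if_cong)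
      moreover have "w \<notin> V \<Longrightarrow> lk f m = 0"
      proof (rule ccontr)
        assume "w \<notin> V" "lk f m \<noteq> 0"
        then have "w \<in> indets f" unfolding indets_def m by (auto simp: in_keys_iff intro!: bexI[of _ m] simp: m)
        then show False using f \<open>w \<notin> V\<close> by auto
      qed
      ultimately show ?thesis using True m
        by (auto simp: lookup_Lin lookup_sum kscale_def lookup_Const_mult lookup_Var coeffVar_def)
    next
      case False
      then have "m \<noteq> Poly_Mapping.single v 1" for v by auto
      then show ?thesis using False
        by (simp add: lookup_Lin lookup_sum kscale_def lookup_Const_mult lookup_Var)
    qed
  qed
  show ?thesis unfolding eq
    by (intro span_sum span_scale span_base) auto
qed

lemma Var_indep: "\<not> module.dependent (kscale :: 'k::field \<Rightarrow> 'k mpoly \<Rightarrow> 'k mpoly) (Var ` V)"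
proof -
  interpret vector_space "kscale :: 'k::field \<Rightarrow> 'k mpoly \<Rightarrow> 'k mpoly" by (rule vs)
  show ?thesis unfolding independent_explicit_module
  proof (intro allI impI)
    fix t u x
    assume t: "finite t" "t \<subseteq> Var ` V" and s: "(\<Sum>v\<in>t. kscale (u v) v) = 0" and x: "x \<in> t"
    then obtain w where xw: "x = Var w" by auto
    have "lk (\<Sum>v\<in>t. kscale (u v) v) (Poly_Mapping.single w 1) = u x"
    proof -
      have "lk (\<Sum>v\<in>t. kscale (u v) v) (Poly_Mapping.single w 1) = (\<Sum>v\<in>t. u v * lk v (Poly_Mapping.single w 1))"
        by (simp add: lookup_sum kscale_def lookup_Const_mult)
      also have "\<dots> = (\<Sum>v\<in>t. if v = x then u v else 0)"
      proof (rule sum.cong[OF refl])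
        fix v assume "v \<in> t"
        then obtain v' where v': "v = Var v'" using t by auto
        have ve: "Var v' = (Var w :: 'k mpoly) \<longleftrightarrow> v' = w"
          unfolding Var_def by (metis inj_single lookup_single_eq lookup_single_not_eq one_neq_zero)
        then show "u v * lk v (Poly_Mapping.single w 1) = (if v = x then u v else 0)"
        proof (cases "v' = w")
          case True then show ?thesis using v' xw by (simp add: lookup_Var)
        next
          case False
          have "v \<noteq> x"
          proof
            assume "v = x"
            then have "lk v (Poly_Mapping.single v' 1) = lk x (Poly_Mapping.single v' 1)" by simp
            then show False using False v' xw by (simp add: lookup_Var)
          qed
          moreover have "Poly_Mapping.single w (1::nat) \<noteq> Poly_Mapping.single v' 1" using False by simp
          ultimately show ?thesis using v' by (simp add: lookup_Var)
        qed
      qed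
      also have "\<dots> = u x" using x t by simp
      finally show ?thesis .
    qed
    then show "u x = 0" using s by simp
  qed
qed

lemma Var_inj: "(Var v :: 'k::field mpoly) = Var w \<Longrightarrow> v = w"
proof -
  assume "(Var v :: 'k::field mpoly) = Var w"
  then have "lk (Var v :: 'k mpoly) (Poly_Mapping.single v 1) = lk (Var w) (Poly_Mapping.single v 1)" by simp
  then show "v = w" by (auto simp: lookup_Var split: if_splits)
qed

lemma dim_bound:
  fixes I :: "'k::field mpoly set"
  assumes IX: "I \<subseteq> carrier (polyring {..<n})" and L: "finite L" "card L \<le> m"
    and sp: "\<And>v. v < n \<Longrightarrow> Var v \<in> module.span kscale (Lin ` I \<union> L)"
  shows "n \<le> dimK (LinI I) + m"
proof -
  interpret vector_space "kscale :: 'k::field \<Rightarrow> 'k mpoly \<Rightarrow> 'k mpoly" by (rule vs)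
  obtain B where B: "B \<subseteq> LinI I" "independent B" "LinI I \<subseteq> span B" "card B = dim (LinI I)"
    using basis_exists by blast
  have "Lin ` I \<subseteq> span (Var ` {..<n})"
    using Lin_in_span[of _ "{..<n}"] IX by auto
  then have "LinI I \<subseteq> span (Var ` {..<n})"
    unfolding LinI_def using span_mono span_span by blast
  then have "B \<subseteq> span (Var ` {..<n})" using B(1) by blast
  then have finB: "finite B" using independent_span_bound[OF _ B(2)] by blast
  have "Lin ` I \<subseteq> span (B \<union> L)"
  proof -
    have "Lin ` I \<subseteq> LinI I" unfolding LinI_def by (rule span_superset)
    also have "\<dots> \<subseteq> span B" by (rule B(3))
    also have "\<dots> \<subseteq> span (B \<union> L)" by (rule span_mono) auto
    finally show ?thesis .
  qed
  moreover have "L \<subseteq> span (B \<union> L)" using span_superset by blast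
  ultimately have "Lin ` I \<union> L \<subseteq> span (B \<union> L)" by blast
  then have "span (Lin ` I \<union> L) \<subseteq> span (B \<union> L)" using span_mono span_span by blast
  then have "Var ` {..<n} \<subseteq> span (B \<union> L)" using sp by blast
  then have "card (Var ` {..<n} :: 'k mpoly set) \<le> card (B \<union> L)"
    using independent_span_bound[OF _ Var_indep] finB L(1) by blast
  also have "\<dots> \<le> card B + card L" by (rule card_Un_le)
  also have "\<dots> \<le> dimK (LinI I) + m" using B(4) L(2) unfolding dimK_def by simp
  finally have c: "card (Var ` {..<n} :: 'k mpoly set) \<le> dimK (LinI I) + m" .
  have "inj_on (Var :: nat \<Rightarrow> 'k mpoly) {..<n}" by (rule inj_onI) (rule Var_inj)
  then have "card (Var ` {..<n} :: 'k mpoly set) = n" by (simp add: card_image)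
  then show ?thesis using c by simp
qed

lemma lower_bound:
  fixes I :: "'k::field mpoly set"
  assumes I: "ideal I (polyring {..<n})" and J: "ideal J (polyring {..<m})"
    and iso: "kalg_iso {..<n} I {..<m} J h"
  shows "n \<le> dimK (LinI I) + m"
proof -
  let ?P = "polyring {..<n} :: 'k mpoly ring"
  let ?Q = "polyring {..<m} :: 'k mpoly ring"
  have hi: "h \<in> ring_iso (?P Quot I) (?Q Quot J)"
    and hc: "\<And>c. h (I +>\<^bsub>?P\<^esub> Const c) = J +>\<^bsub>?Q\<^esub> Const c"
    using iso unfolding kalg_iso_def by auto
  have hom: "h \<in> ring_hom (?P Quot I) (?Q Quot J)" and bij: "bij_betw h (carrier (?P Quot I)) (carrier (?Q Quot J))"
    using hi unfolding ring_iso_def by auto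
  have rcP: "I +>\<^bsub>?P\<^esub> p \<in> carrier (?P Quot I)" if "p \<in> carrier ?P" for p
    using ring_hom_closed[OF rcos_hom[OF I] that] .
  have rcQ: "J +>\<^bsub>?Q\<^esub> q \<in> carrier (?Q Quot J)" if "q \<in> carrier ?Q" for q
    using ring_hom_closed[OF rcos_hom[OF J] that] .
  define qf where "qf v = (SOME q. q \<in> carrier ?Q \<and> h (I +>\<^bsub>?P\<^esub> Var v) = J +>\<^bsub>?Q\<^esub> q)" for v
  have qf: "qf v \<in> carrier ?Q \<and> h (I +>\<^bsub>?P\<^esub> Var v) = J +>\<^bsub>?Q\<^esub> qf v" if v: "v < n" for v
  proof -
    have "h (I +>\<^bsub>?P\<^esub> Var v) \<in> carrier (?Q Quot J)"
      using ring_hom_closed[OF hom rcP[of "Var v"]] v by simp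
    then have "\<exists>q. q \<in> carrier ?Q \<and> h (I +>\<^bsub>?P\<^esub> Var v) = J +>\<^bsub>?Q\<^esub> q"
      using quot_carrier[OF J] by auto
    then show ?thesis unfolding qf_def by (rule someI_ex)
  qed
  define pf where "pf w = (SOME p. p \<in> carrier ?P \<and> h (I +>\<^bsub>?P\<^esub> p) = J +>\<^bsub>?Q\<^esub> Var w)" for w
  have pf: "pf w \<in> carrier ?P \<and> h (I +>\<^bsub>?P\<^esub> pf w) = J +>\<^bsub>?Q\<^esub> Var w" if w: "w < m" for w
  proof -
    have "J +>\<^bsub>?Q\<^esub> Var w \<in> h ` carrier (?P Quot I)"
      using rcQ[of "Var w"] w bij_betw_imp_surj_on[OF bij] by simp
    then obtain X where X: "X \<in> carrier (?P Quot I)" "h X = J +>\<^bsub>?Q\<^esub> Var w" by auto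
    then obtain p where "p \<in> carrier ?P" "X = I +>\<^bsub>?P\<^esub> p" using quot_carrier[OF I] by auto
    then have "\<exists>p. p \<in> carrier ?P \<and> h (I +>\<^bsub>?P\<^esub> p) = J +>\<^bsub>?Q\<^esub> Var w" using X by auto
    then show ?thesis unfolding pf_def by (rule someI_ex)
  qed
  have pfc: "\<And>w. w \<in> {..<m} \<Longrightarrow> pf w \<in> carrier ?P" using pf by simp
  have spc: "subst pf q \<in> carrier ?P" if "q \<in> carrier ?Q" for q
    by (rule subst_carrier[OF that pfc])
  have agree: "h (I +>\<^bsub>?P\<^esub> subst pf q) = J +>\<^bsub>?Q\<^esub> q" if "q \<in> carrier ?Q" for q
    using that
  proof (induction q rule: polyring_induct)
    case (Const c) then show ?case using hc by simp
  next
    case (Var w) then show ?case using pf by simp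
  next
    case (add p q)
    have "h (I +>\<^bsub>?P\<^esub> subst pf (p + q)) = h ((I +>\<^bsub>?P\<^esub> subst pf p) \<oplus>\<^bsub>?P Quot I\<^esub> (I +>\<^bsub>?P\<^esub> subst pf q))"
      using ring_hom_add[OF rcos_hom[OF I] spc[OF add(1)] spc[OF add(2)]] by (simp add: subst_add)
    also have "\<dots> = h (I +>\<^bsub>?P\<^esub> subst pf p) \<oplus>\<^bsub>?Q Quot J\<^esub> h (I +>\<^bsub>?P\<^esub> subst pf q)"
      by (rule ring_hom_add[OF hom rcP[OF spc[OF add(1)]] rcP[OF spc[OF add(2)]]])
    also have "\<dots> = J +>\<^bsub>?Q\<^esub> (p + q)"
      using ring_hom_add[OF rcos_hom[OF J] add(1) add(2)] add(3,4) by simp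
    finally show ?case .
  next
    case (mult p q)
    have "h (I +>\<^bsub>?P\<^esub> subst pf (p * q)) = h ((I +>\<^bsub>?P\<^esub> subst pf p) \<otimes>\<^bsub>?P Quot I\<^esub> (I +>\<^bsub>?P\<^esub> subst pf q))"
      using ring_hom_mult[OF rcos_hom[OF I] spc[OF mult(1)] spc[OF mult(2)]] by (simp add: subst_mult)
    also have "\<dots> = h (I +>\<^bsub>?P\<^esub> subst pf p) \<otimes>\<^bsub>?Q Quot J\<^esub> h (I +>\<^bsub>?P\<^esub> subst pf q)"
      by (rule ring_hom_mult[OF hom rcP[OF spc[OF mult(1)]] rcP[OF spc[OF mult(2)]]])
    also have "\<dots> = J +>\<^bsub>?Q\<^esub> (p * q)"
      using ring_hom_mult[OF rcos_hom[OF J] mult(1) mult(2)] mult(3,4) by simp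
    finally show ?case .
  qed
  have key: "Var v - subst pf (qf v) \<in> I" if v: "v < n" for v
  proof -
    have vc: "(Var v :: 'k mpoly) \<in> carrier ?P" using v by simp
    have gc: "subst pf (qf v) \<in> carrier ?P" using spc qf[OF v] by blast
    have "h (I +>\<^bsub>?P\<^esub> Var v) = h (I +>\<^bsub>?P\<^esub> subst pf (qf v))"
      using qf[OF v] agree[of "qf v"] by simp
    then have "I +>\<^bsub>?P\<^esub> Var v = I +>\<^bsub>?P\<^esub> subst pf (qf v)"
      using bij_betw_imp_inj_on[OF bij] rcP[OF vc] rcP[OF gc] by (auto dest: inj_onD)
    then show ?thesis using rcos_eq_iff[OF I vc gc] by simp
  qed
  define b where "b w = lk (pf w) 0" for w
  define p' where "p' w = pf w - Const (b w)" for w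
  define q' where "q' v = subst (\<lambda>w. Var w + Const (b w)) (qf v)" for v
  have p'0: "lk (p' w) 0 = 0" for w by (simp add: p'_def b_def lookup_minus)
  have q'c: "q' v \<in> carrier ?Q" if v: "v < n" for v
    unfolding q'_def
  proof (rule subst_carrier)
    show "qf v \<in> carrier ?Q" using qf[OF v] by simp
    fix w :: nat assume "w \<in> {..<m}"
    then show "Var w + Const (b w) \<in> carrier ?Q" using indets_add[of "Var w" "Const (b w)"] by auto
  qed
  have sub_eq: "subst p' (q' v) = subst pf (qf v)" for v
  proof -
    have "subst p' (q' v) = subst (\<lambda>w. subst p' (Var w + Const (b w))) (qf v)"
      unfolding q'_def by (rule subst_subst)
    also have "(\<lambda>w. subst p' (Var w + Const (b w))) = pf"
      by (rule ext) (simp add: subst_add p'_def)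
    finally show ?thesis .
  qed
  define L where "L = Lin ` p' ` {..<m}"
  have L: "finite L" "card L \<le> m"
    unfolding L_def using card_image_le[of "p' ` {..<m}" Lin] card_image_le[of "{..<m}" p'] by auto
  show ?thesis
  proof (rule dim_bound[OF _ L])
    show "I \<subseteq> carrier ?P" using I_sub[OF I] by blast
    fix v assume v: "v < n"
    interpret vector_space "kscale :: 'k::field \<Rightarrow> 'k mpoly \<Rightarrow> 'k mpoly" by (rule vs)
    let ?g = "subst pf (qf v)"
    have "Lin (subst p' (q' v)) = (\<Sum>w\<in>{..<m}. Const (coeffVar w (q' v)) * Lin (p' w))"
      using chain[OF q'c[OF v] _ p'0] by simp
    also have "\<dots> \<in> span (Lin ` I \<union> L)"
    proof (rule span_sum)
      fix w assume "w \<in> {..<m}"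
      then have "Lin (p' w) \<in> span (Lin ` I \<union> L)" unfolding L_def by (intro span_base) auto
      then have "kscale (coeffVar w (q' v)) (Lin (p' w)) \<in> span (Lin ` I \<union> L)" by (rule span_scale)
      then show "Const (coeffVar w (q' v)) * Lin (p' w) \<in> span (Lin ` I \<union> L)" by (simp add: kscale_def)
    qed
    finally have g: "Lin ?g \<in> span (Lin ` I \<union> L)" using sub_eq by simp
    have "Lin (Var v - ?g) \<in> span (Lin ` I \<union> L)"
      using key[OF v] by (intro span_base) auto
    then have "Lin (Var v - ?g) + Lin ?g \<in> span (Lin ` I \<union> L)" using g by (rule span_add)
    then show "Var v \<in> span (Lin ` I \<union> L)" by (simp add: Lin_diff)
  qed
qed

theorem corollary4p2:
  fixes n s :: nat and z :: "nat \<Rightarrow> nat" and f :: "nat \<Rightarrow> 'k::field mpoly"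
    and I :: "'k mpoly set"
  assumes I_ideal: "ideal I (polyring {..<n})"
    and I_M: "I \<subseteq> maxideal {..<n}"
    and z_inj: "inj_on z {..<s}"
    and z_X: "z ` {..<s} \<subseteq> {..<n}"
    and f_I: "\<forall>i<s. f i \<in> I"
    and f_sep: "coherently_separating {..<n} s z f"
    and s_dim: "s = dimK (LinI I)"
  shows "edim {..<n} I = n - s \<and>
         (\<exists>h. kalg_iso {..<n} I ({..<n} - z ` {..<s})
                 (I \<inter> carrier (polyring ({..<n} - z ` {..<s}))) h \<and>
              (\<forall>p \<in> carrier (polyring {..<n}).
                 h (I +>\<^bsub>polyring {..<n}\<^esub> p) =
                 (I \<inter> carrier (polyring ({..<n} - z ` {..<s})))
                   +>\<^bsub>polyring ({..<n} - z ` {..<s})\<^esub> subst (sep_subst s z f) p)) \<and>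
         card ({..<n} - z ` {..<s}) = n - s \<and>
         (\<forall>m J h. ideal J (polyring {..<m}) \<and> kalg_iso {..<n} I {..<m} J h \<longrightarrow> n - s \<le> m)"
proof -
  interpret sepsetup n s z f I
    by (rule sepsetup.intro[OF I_ideal z_inj z_X f_I f_sep])
  have lb: "\<forall>m J h. ideal J (polyring {..<m}) \<and> kalg_iso {..<n} I {..<m} J h \<longrightarrow> n - s \<le> m"
  proof (intro allI impI)
    fix m J h assume "ideal J (polyring {..<m}) \<and> kalg_iso {..<n} I {..<m} J h"
    then have "n \<le> dimK (LinI I) + m" using lower_bound[OF I_ideal] by blast
    then show "n - s \<le> m" using s_dim by simp
  qed
  have ed: "edim {..<n} I = n - s"
    unfolding edim_def
  proof (rule Least_equality)
    show "\<exists>J h. ideal J (polyring {..<n - s}) \<and> kalg_iso {..<n} I {..<n - s} J h"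
      by (rule edim_witness)
  next
    fix m assume "\<exists>J h. ideal J (polyring {..<m}) \<and> kalg_iso {..<n} I {..<m} J (h :: 'k mpoly set \<Rightarrow> 'k mpoly set)"
    then show "n - s \<le> m" using lb by blast
  qed
  show ?thesis using ed reembed card_Xh lb by blast
qed


end
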